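(* Let $M=\mathbb{S}^1\times[-\rho,\rho]$ carry a metric of the form $ds^2=d\sigma^2+f(\theta,\sigma)^2d\theta^2$, with $\theta\in\mathbb{S}^1=[0,2\pi)$, $\sigma\in[-\rho,\rho]$ and $f>0$ smooth. Suppose there are constants $\alpha>0$ and $C\ge 0$ such that $R\ge-\alpha$ on $M$ and $|k_g|\le C$ on $\partial M$. For $s\in[-\rho,\rho]$ let $L_s=\int_0^{2\pi}f(\theta,s)\,d\theta$ be the length of the parallel $\mathbb{S}^1\times\{s\}$. Then for all $s,q\in[-\rho,\rho]$, $$L_s e^{-2\rho(\alpha\rho+C)}\le L_q\le L_s e^{2\rho(\alpha\rho+C)}.$$
   Context: $R$ is the scalar curvature (twice the Gauss curvature) of the metric and $k_g$ the geodesic curvature of the boundary curves $\mathbb{S}^1\times\{\pm\rho\}$. *)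

theory Defs
  imports "HOL-Analysis.Analysis"
begin

fun Ck_on :: "nat \<Rightarrow> (real \<times> real) set \<Rightarrow> (real \<times> real \<Rightarrow> real) \<Rightarrow> bool" where
  "Ck_on 0 U g = continuous_on U g"
| "Ck_on (Suc n) U g =
     (\<exists>g1 g2. (\<forall>x\<in>U. (g has_derivative (\<lambda>(h1, h2). g1 x * h1 + g2 x * h2)) (at x))
              \<and> Ck_on n U g1 \<and> Ck_on n U g2)"

definition smooth_on2 :: "(real \<times> real) set \<Rightarrow> (real \<times> real \<Rightarrow> real) \<Rightarrow> bool" where
  "smooth_on2 U g \<longleftrightarrow> open U \<and> (\<forall>n. Ck_on n U g)"

definition smooth_strip :: "real \<Rightarrow> (real \<Rightarrow> real \<Rightarrow> real) \<Rightarrow> bool" where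
  "smooth_strip \<rho> f \<longleftrightarrow>
     (\<exists>U. UNIV \<times> {-\<rho>..\<rho>} \<subseteq> U \<and> smooth_on2 U (\<lambda>(\<theta>, \<sigma>). f \<theta> \<sigma>))"

text \<open>Scalar curvature R = 2K of ds^2 = d sigma^2 + f^2 d theta^2, where K = - f_{sigma sigma} / f.\<close>
definition scalar_curv :: "(real \<Rightarrow> real \<Rightarrow> real) \<Rightarrow> real \<Rightarrow> real \<Rightarrow> real" where
  "scalar_curv f \<theta> \<sigma> = - 2 * deriv (\<lambda>t. deriv (\<lambda>u. f \<theta> u) t) \<sigma> / f \<theta> \<sigma>"

text \<open>Geodesic curvature of the parallel S^1 x {sigma} (up to the orientation sign,
  which is irrelevant for |k_g|): k_g = f_sigma / f.\<close>
definition geod_curv :: "(real \<Rightarrow> real \<Rightarrow> real) \<Rightarrow> real \<Rightarrow> real \<Rightarrow> real" where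
  "geod_curv f \<theta> \<sigma> = deriv (\<lambda>u. f \<theta> u) \<sigma> / f \<theta> \<sigma>"

definition parallel_length :: "(real \<Rightarrow> real \<Rightarrow> real) \<Rightarrow> real \<Rightarrow> real" where
  "parallel_length f s = integral {0..2*pi} (\<lambda>\<theta>. f \<theta> s)"

end

theory Submission imports Defs begin

lemma partial2:
  assumes "(G has_derivative (\<lambda>(h1, h2). a * h1 + b * h2)) (at (t, u))"
  shows "((\<lambda>v. G (t, v)) has_real_derivative b) (at u)"
proof -
  have "((\<lambda>v. (t, v)) has_derivative (\<lambda>h. (0, h))) (at u)"
    by (auto intro!: derivative_eq_intros)
  from has_derivative_compose[OF this assms]
  have "((\<lambda>v. G (t,v)) has_derivative (\<lambda>h. b*h)) (at u)" by simp
  then show ?thesis unfolding has_field_derivative_def by (rule has_derivative_eq_rhs) (auto simp: fun_eq_iff)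
qed

lemma logbound:
  fixes F F' F'' :: "real \<Rightarrow> real" and \<rho> \<alpha> C :: real
  assumes rho: "\<rho> > 0" and al: "\<alpha> > 0" and Cn: "C \<ge> 0"
  and D1: "\<And>u. u\<in>{-\<rho>..\<rho>} \<Longrightarrow> (F has_real_derivative F' u) (at u)"
  and D2: "\<And>u. u\<in>{-\<rho>..\<rho>} \<Longrightarrow> (F' has_real_derivative F'' u) (at u)"
  and pos: "\<And>u. u\<in>{-\<rho>..\<rho>} \<Longrightarrow> F u > 0"
  and cv: "\<And>u. u\<in>{-\<rho>..\<rho>} \<Longrightarrow> F'' u / F u \<le> \<alpha>/2"
  and b1: "\<bar>F' \<rho> / F \<rho>\<bar> \<le> C" and b2: "\<bar>F' (-\<rho>) / F (-\<rho>)\<bar> \<le> C"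
  and s: "s \<in> {-\<rho>..\<rho>}" and q: "q \<in> {-\<rho>..\<rho>}"
  shows "F q \<le> F s * exp (2*\<rho>*(\<alpha>*\<rho>+C))"
proof -
  define H' where "H' = (\<lambda>u. F' u / F u)"
  define H'' where "H'' = (\<lambda>u. F'' u / F u - (F' u / F u)^2)"
  have dH: "((\<lambda>v. ln (F v)) has_real_derivative H' u) (at u)" if "u \<in> {-\<rho>..\<rho>}" for u
    using D1[OF that] pos[OF that] unfolding H'_def
    by (auto intro!: derivative_eq_intros simp: field_simps)
  have dH': "(H' has_real_derivative H'' u) (at u)" if "u \<in> {-\<rho>..\<rho>}" for u
    using D1[OF that] D2[OF that] pos[OF that] unfolding H'_def H''_def
    by (auto intro!: derivative_eq_intros simp: field_simps power2_eq_square)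
  have H''le: "H'' u \<le> \<alpha>/2" if "u \<in> {-\<rho>..\<rho>}" for u
    using cv[OF that] unfolding H''_def by (smt (verit) zero_le_power2)
  have up: "H' u \<le> C + \<alpha>*\<rho>" if u: "u \<in> {-\<rho>..\<rho>}" for u
  proof (cases "u = -\<rho>")
    case True then show ?thesis using abs_le_D1[OF b2] al rho unfolding H'_def by (smt (verit) mult_pos_pos)
  next
    case False
    then have "-\<rho> < u" using u by auto
    from MVT2[OF this, of H' H''] dH' u obtain z where z: "-\<rho> < z" "z < u"
      "H' u - H' (-\<rho>) = (u - -\<rho>) * H'' z" by auto
    have "(u - -\<rho>) * H'' z \<le> (u - -\<rho>) * (\<alpha>/2)"
      using H''le[of z] z u by (intro mult_left_mono) auto
    also have "\<dots> \<le> \<alpha>*\<rho>" using u al by (auto simp: field_simps)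
    finally show ?thesis using z abs_le_D1[OF b2] unfolding H'_def by linarith
  qed
  have lo: "H' u \<ge> - C - \<alpha>*\<rho>" if u: "u \<in> {-\<rho>..\<rho>}" for u
  proof (cases "u = \<rho>")
    case True then show ?thesis using abs_le_D2[OF b1] al rho unfolding H'_def by (smt (verit) mult_pos_pos)
  next
    case False
    then have "u < \<rho>" using u by auto
    from MVT2[OF this, of H' H''] dH' u obtain z where z: "u < z" "z < \<rho>"
      "H' \<rho> - H' u = (\<rho> - u) * H'' z" by auto
    have "(\<rho> - u) * H'' z \<le> (\<rho> - u) * (\<alpha>/2)"
      using H''le[of z] z u by (intro mult_left_mono) auto
    also have "\<dots> \<le> \<alpha>*\<rho>" using u al mult_nonneg_nonneg[of \<alpha> "\<rho>+u"] by (auto simp: field_simps)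
    finally show ?thesis using z abs_le_D2[OF b1] unfolding H'_def by linarith
  qed
  have habs: "\<bar>H' u\<bar> \<le> \<alpha>*\<rho>+C" if "u \<in> {-\<rho>..\<rho>}" for u
    using up[OF that] lo[OF that] by auto
  have key: "ln (F q) - ln (F s) \<le> 2*\<rho>*(\<alpha>*\<rho>+C)"
  proof (cases "s = q")
    case True then show ?thesis using rho al Cn by auto
  next
    case False
    define a where "a = min s q"
    define b where "b = max s q"
    have ab: "a < b" using False unfolding a_def b_def by auto
    from MVT2[OF ab, of "\<lambda>v. ln (F v)" H'] dH s q obtain z where z: "a < z" "z < b"
      "ln (F b) - ln (F a) = (b - a) * H' z" unfolding a_def b_def by (smt (verit) atLeastAtMost_iff)
    have zin: "z \<in> {-\<rho>..\<rho>}" using z s q unfolding a_def b_def by auto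
    have "\<bar>ln (F b) - ln (F a)\<bar> = (b - a) * \<bar>H' z\<bar>" using z ab by (simp add: abs_mult)
    also have "\<dots> \<le> (b - a) * (\<alpha>*\<rho>+C)" using habs[OF zin] ab by (intro mult_left_mono) auto
    also have "\<dots> \<le> 2*\<rho>*(\<alpha>*\<rho>+C)" using s q al rho Cn unfolding a_def b_def
      by (intro mult_right_mono) auto
    finally have "\<bar>ln (F b) - ln (F a)\<bar> \<le> 2*\<rho>*(\<alpha>*\<rho>+C)" .
    then show ?thesis unfolding a_def b_def by (cases "s \<le> q") (auto simp: min_def max_def)
  qed
  have "F q = exp (ln (F q))" using pos[OF q] by simp
  also have "\<dots> \<le> exp (ln (F s) + 2*\<rho>*(\<alpha>*\<rho>+C))" using key by simp
  also have "\<dots> = F s * exp (2*\<rho>*(\<alpha>*\<rho>+C))" using pos[OF s] by (simp add: exp_add)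
  finally show ?thesis .
qed

theorem lemma2p2:
  fixes f :: "real \<Rightarrow> real \<Rightarrow> real" and \<rho> \<alpha> C :: real
  assumes rho_pos: "\<rho> > 0"
    and smooth: "smooth_strip \<rho> f"
    and periodic: "\<And>\<theta> \<sigma>. \<sigma> \<in> {-\<rho>..\<rho>} \<Longrightarrow> f (\<theta> + 2*pi) \<sigma> = f \<theta> \<sigma>"
    and pos: "\<And>\<theta> \<sigma>. \<sigma> \<in> {-\<rho>..\<rho>} \<Longrightarrow> f \<theta> \<sigma> > 0"
    and alpha_pos: "\<alpha> > 0" and C_nonneg: "C \<ge> 0"
    and curv: "\<And>\<theta> \<sigma>. \<sigma> \<in> {-\<rho>..\<rho>} \<Longrightarrow> scalar_curv f \<theta> \<sigma> \<ge> - \<alpha>"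
    and bdry: "\<And>\<theta>. \<bar>geod_curv f \<theta> \<rho>\<bar> \<le> C" "\<And>\<theta>. \<bar>geod_curv f \<theta> (-\<rho>)\<bar> \<le> C"
  shows "\<forall>s\<in>{-\<rho>..\<rho>}. \<forall>q\<in>{-\<rho>..\<rho>}.
           parallel_length f s * exp (- 2 * \<rho> * (\<alpha> * \<rho> + C)) \<le> parallel_length f q
         \<and> parallel_length f q \<le> parallel_length f s * exp (2 * \<rho> * (\<alpha> * \<rho> + C))"
proof -
  define F where "F = (\<lambda>(\<theta>::real, \<sigma>::real). f \<theta> \<sigma>)"
  from smooth obtain U where sub: "UNIV \<times> {-\<rho>..\<rho>} \<subseteq> U" and oU: "open U"
    and ck: "\<And>n. Ck_on n U F"
    unfolding smooth_strip_def smooth_on2_def F_def by blast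
  from ck[of 0] have contF: "continuous_on U F" by simp
  from ck[of 2] obtain g1 g2 where
    dF: "\<forall>x\<in>U. (F has_derivative (\<lambda>(h1, h2). g1 x * h1 + g2 x * h2)) (at x)"
    and c2: "Ck_on (Suc 0) U g2" by (auto simp: numeral_2_eq_2)
  from c2 obtain g21 g22 where
    dg2: "\<forall>x\<in>U. (g2 has_derivative (\<lambda>(h1, h2). g21 x * h1 + g22 x * h2)) (at x)" by auto
  have pw: "f t q \<le> f t s * exp (2*\<rho>*(\<alpha>*\<rho>+C))"
    if s: "s \<in> {-\<rho>..\<rho>}" and q: "q \<in> {-\<rho>..\<rho>}" for t s q
  proof -
    define V where "V = (\<lambda>v. (t, v)) -` U"
    have oV: "open V" unfolding V_def
      by (rule open_vimage[OF oU]) (auto intro!: continuous_intros)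
    have inV: "u \<in> V" if "u \<in> {-\<rho>..\<rho>}" for u using sub that unfolding V_def by auto
    have D1: "((\<lambda>v. f t v) has_real_derivative g2 (t, u)) (at u)" if "u \<in> V" for u
      using partial2[of F "g1 (t,u)" "g2 (t,u)" t u] dF that unfolding V_def F_def by auto
    have D2: "((\<lambda>v. g2 (t, v)) has_real_derivative g22 (t, u)) (at u)" if "u \<in> V" for u
      using partial2[of g2 "g21 (t,u)" "g22 (t,u)" t u] dg2 that unfolding V_def by auto
    have dv: "deriv (\<lambda>v. f t v) u = g2 (t, u)" if "u \<in> V" for u
      using D1[OF that] by (rule DERIV_imp_deriv)
    have dv2: "deriv (\<lambda>x. deriv (\<lambda>v. f t v) x) u = g22 (t, u)" if "u \<in> V" for u
    proof (rule DERIV_imp_deriv)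
      show "((\<lambda>x. deriv (\<lambda>v. f t v) x) has_real_derivative g22 (t, u)) (at u)"
        by (rule has_field_derivative_transform_within_open[OF D2[OF that] oV that]) (simp add: dv)
    qed
    show ?thesis
    proof (rule logbound[of \<rho> \<alpha> C "\<lambda>v. f t v" "\<lambda>v. g2 (t, v)" "\<lambda>v. g22 (t, v)" s q,
          OF rho_pos alpha_pos C_nonneg _ _ _ _ _ _ s q])
      show "\<And>u. u \<in> {-\<rho>..\<rho>} \<Longrightarrow> ((\<lambda>v. f t v) has_real_derivative g2 (t, u)) (at u)"
        using D1 inV by blast
      show "\<And>u. u \<in> {-\<rho>..\<rho>} \<Longrightarrow> ((\<lambda>v. g2 (t, v)) has_real_derivative g22 (t, u)) (at u)"
        using D2 inV by blast
      show "\<And>u. u \<in> {-\<rho>..\<rho>} \<Longrightarrow> f t u > 0" using pos by blast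
      show "g22 (t, u) / f t u \<le> \<alpha>/2" if u: "u \<in> {-\<rho>..\<rho>}" for u
      proof -
        have "- 2 * g22 (t, u) / f t u \<ge> - \<alpha>"
          using curv[OF u, of t] unfolding scalar_curv_def dv2[OF inV[OF u]] .
        then show ?thesis by (simp add: field_simps)
      qed
      show "\<bar>g2 (t, \<rho>) / f t \<rho>\<bar> \<le> C"
        using bdry(1)[of t] rho_pos unfolding geod_curv_def by (simp add: dv inV)
      show "\<bar>g2 (t, -\<rho>) / f t (-\<rho>)\<bar> \<le> C"
        using bdry(2)[of t] rho_pos unfolding geod_curv_def by (simp add: dv inV)
    qed
  qed
  have cont: "continuous_on {0..2*pi} (\<lambda>\<theta>. f \<theta> s)" if s: "s \<in> {-\<rho>..\<rho>}" for s
  proof -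
    have "continuous_on {0..2*pi} (\<lambda>\<theta>. F (\<theta>, s))"
      by (rule continuous_on_compose2[OF contF]) (use sub s in \<open>auto intro!: continuous_intros\<close>)
    then show ?thesis unfolding F_def by simp
  qed
  have L: "parallel_length f q \<le> parallel_length f s * exp (2*\<rho>*(\<alpha>*\<rho>+C))"
    if s: "s \<in> {-\<rho>..\<rho>}" and q: "q \<in> {-\<rho>..\<rho>}" for s q
  proof -
    have "parallel_length f q \<le> integral {0..2*pi} (\<lambda>\<theta>. f \<theta> s * exp (2*\<rho>*(\<alpha>*\<rho>+C)))"
      unfolding parallel_length_def
      by (rule integral_le) (auto intro!: integrable_continuous_interval continuous_intros cont s q pw)
    also have "\<dots> = parallel_length f s * exp (2*\<rho>*(\<alpha>*\<rho>+C))"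
      unfolding parallel_length_def by simp
    finally show ?thesis .
  qed
  show ?thesis
  proof (intro ballI conjI)
    fix s q assume s: "s \<in> {-\<rho>..\<rho>}" and q: "q \<in> {-\<rho>..\<rho>}"
    show "parallel_length f q \<le> parallel_length f s * exp (2 * \<rho> * (\<alpha> * \<rho> + C))"
      using L[OF s q] by simp
    have "parallel_length f s * exp (- 2 * \<rho> * (\<alpha> * \<rho> + C))
        \<le> parallel_length f q * exp (2*\<rho>*(\<alpha>*\<rho>+C)) * exp (- 2 * \<rho> * (\<alpha> * \<rho> + C))"
      using L[OF q s] by (intro mult_right_mono) auto
    also have "\<dots> = parallel_length f q" by (simp add: mult.assoc flip: exp_add)
    finally show "parallel_length f s * exp (- 2 * \<rho> * (\<alpha> * \<rho> + C)) \<le> parallel_length f q" .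
  qed
qed

end
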